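(* Let $0<\alpha<1/4$ and $0<c<1$. For each integer $t\geq 1$ let $a_t$ be a positive integer with $ct^{\alpha}\leq a_t\leq t^{\alpha}$, let $$f_t(X)=X^3+a_t^2(a_t^3-2)X^2-a_t(a_t^3-1)X+1+tX(a_tX-1),$$ let $\theta_t^{(1)}$ be the smallest positive root of $f_t(X)$, and let $\mathcal{O}_t=\mathbf{Z}[\theta_t^{(1)}]$, an order in the totally real cubic field $\mathbf{Q}(\theta_t^{(1)})$. Then for all sufficiently large $t$ (depending only on $\alpha$), the pair $(\theta_t^{(1)},\,a_t\theta_t^{(1)}-1)$ is a system of fundamental units for $\mathcal{O}_t$.
   Context: For integers $t\geq 1$, $a_t\geq 1$, the polynomial $f_t(X)$ has only real roots, two positive and one negative; for $a_t$ large it is irreducible over $\mathbf{Q}$, so $\mathcal{O}_t$ is an order of a totally real cubic field. A system of fundamental units for an order $\mathcal{O}$ of a totally real cubic field is a pair $(\eta_1,\eta_2)$ of units of $\mathcal{O}$ whose images generate the free abelian group $\mathcal{O}^\times/\{\pm1\}$ of rank $2$ (i.e. every unit of $\mathcal{O}$ is $\pm\eta_1^{m}\eta_2^{n}$ with $m,n\in\mathbf{Z}$). *)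

theory Defs
  imports Complex_Main "HOL-Computational_Algebra.Polynomial"
begin

definition f_poly :: "int \<Rightarrow> int \<Rightarrow> int poly" where
  "f_poly t a = monom 1 3 + smult (a^2 * (a^3 - 2)) (monom 1 2)
      - smult (a * (a^3 - 1)) [:0, 1:] + 1 + smult t ([:0, 1:] * [:-1, a:])"

definition smallest_pos_root :: "int poly \<Rightarrow> real" where
  "smallest_pos_root p = Min {x::real. 0 < x \<and> poly (map_poly of_int p) x = 0}"

definition Zadj :: "real \<Rightarrow> real set" where
  "Zadj \<theta> = {poly (map_poly of_int p) \<theta> | p :: int poly. True}"

definition units_of_order :: "real set \<Rightarrow> real set" where
  "units_of_order R = {u \<in> R. u \<noteq> 0 \<and> inverse u \<in> R}"

definition fundamental_units :: "real set \<Rightarrow> real \<Rightarrow> real \<Rightarrow> bool" where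
  "fundamental_units R \<eta>1 \<eta>2 \<longleftrightarrow>
     \<eta>1 \<in> units_of_order R \<and> \<eta>2 \<in> units_of_order R \<and>
     (\<forall>u \<in> units_of_order R. \<exists>(m::int) (n::int) (s::real). (s = 1 \<or> s = -1) \<and>
         u = s * \<eta>1 powi m * \<eta>2 powi n)"

end

theory Submission
  imports Defs
begin

lemma ratroot_int:
  fixes n d B C :: int
  assumes eq: "n^3 + B*n^2*d - C*n*d^2 + d^3 = 0" and cop: "coprime n d" and dpos: "d > 0"
  shows "d = 1 \<and> (n = 1 \<or> n = -1)"
proof -
  have "d dvd n^3"
  proof -
    have "n^3 = d * (C*n*d - B*n^2 - d^2)" using eq by (simp add: algebra_simps power2_eq_square power3_eq_cube)
    then show ?thesis by simp
  qed
  moreover have "coprime d (n^3)" using cop by (simp add: coprime_commute)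
  ultimately have "is_unit d" using coprime_absorb_left by blast
  hence d1: "d = 1" using dpos by simp
  have "n * (n^2 + B*n - C) = -1" using eq d1 by (simp add: algebra_simps power2_eq_square power3_eq_cube)
  hence "n dvd 1" by (metis dvd_minus_iff dvd_triv_left)
  hence "\<bar>n\<bar> = 1" using zdvd1_eq by blast
  hence "n = 1 \<or> n = -1" by auto
  thus ?thesis using d1 by simp
qed

lemma no_rat_root:
  fixes B C :: int and x :: real
  assumes "x \<in> \<rat>" and f1: "B - C + 2 \<noteq> 0" and fm1: "B + C \<noteq> 0"
  shows "x^3 + of_int B * x^2 - of_int C * x + 1 \<noteq> 0"
proof
  assume h: "x^3 + of_int B * x^2 - of_int C * x + 1 = 0"
  obtain q where xq: "x = of_rat q" using assms(1) Rats_cases by blast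
  obtain n d where nd: "quotient_of q = (n, d)" by (cases "quotient_of q") auto
  have dpos: "d > 0" using nd quotient_of_denom_pos by blast
  have cop: "coprime n d" using nd quotient_of_coprime by blast
  have qv: "q = of_int n / of_int d" using nd quotient_of_div by blast
  have xv: "x = real_of_int n / real_of_int d" using xq qv by (simp add: of_rat_divide)
  have dne: "real_of_int d \<noteq> 0" using dpos by simp
  have "real_of_int (n^3 + B*n^2*d - C*n*d^2 + d^3) = (x^3 + of_int B * x^2 - of_int C * x + 1) * (real_of_int d)^3"
    using dne unfolding xv by (simp add: field_simps power3_eq_cube power2_eq_square)
  also have "\<dots> = 0" using h by simp
  finally have "n^3 + B*n^2*d - C*n*d^2 + d^3 = 0" by linarith
  from ratroot_int[OF this cop dpos] have "d = 1" "n = 1 \<or> n = -1" by auto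
  then show False using h xv f1 fm1
  proof (elim disjE)
    assume "d = 1" "n = 1" thus False using h xv f1 by (simp; linarith)
  next
    assume "d = 1" "n = -1" thus False using h xv fm1 by (simp; linarith)
  qed
qed

lemma max3_sum:
  fixes a b c :: real assumes "a + b + c = 0"
  shows "max a b + max a c + max b c \<le> max \<bar>a - b\<bar> (max \<bar>a - c\<bar> \<bar>b - c\<bar>)"
proof -
  have "max a b + max a c + max b c \<le> \<bar>a - c\<bar>" if "a \<ge> b" "b \<ge> c" using that assms by (simp add: max_def)
  show ?thesis
  proof (cases "a \<ge> b")
    case True
    show ?thesis
    proof (cases "b \<ge> c")
      case True
      then show ?thesis using \<open>a \<ge> b\<close> assms by (simp add: max_def)
    next
      case False
      show ?thesis
      proof (cases "a \<ge> c")
        case True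
        then show ?thesis using \<open>a \<ge> b\<close> False assms by (simp add: max_def)
      next
        case False
        then show ?thesis using \<open>a \<ge> b\<close> \<open>\<not> b \<ge> c\<close> assms by (simp add: max_def)
      qed
    qed
  next
    case False
    show ?thesis
    proof (cases "a \<ge> c")
      case True
      then show ?thesis using False assms by (simp add: max_def)
    next
      case False
      show ?thesis
      proof (cases "b \<ge> c")
        case True
        then show ?thesis using \<open>\<not> a \<ge> b\<close> False assms by (simp add: max_def)
      next
        case False
        then show ?thesis using \<open>\<not> a \<ge> b\<close> \<open>\<not> a \<ge> c\<close> assms by (simp add: max_def)
      qed
    qed
  qed
qed

lemma ln_abs_powi: fixes x :: real assumes "x \<noteq> 0" shows "ln \<bar>x powi k\<bar> = of_int k * ln \<bar>x\<bar>"
proof -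
  have "\<bar>x powi k\<bar> = \<bar>x\<bar> powi k" by (rule power_int_abs)
  also have "\<dots> = \<bar>x\<bar> powr of_int k" using assms by (simp add: powr_real_of_int')
  finally show ?thesis by simp
qed

lemma half_bound: fixes x y p q :: real assumes "\<bar>x\<bar> \<le> 1/2" "\<bar>y\<bar> \<le> 1/2"
  shows "\<bar>x * p + y * q\<bar> \<le> (\<bar>p\<bar> + \<bar>q\<bar>) / 2"
proof -
  have "\<bar>x * p + y * q\<bar> \<le> \<bar>x\<bar> * \<bar>p\<bar> + \<bar>y\<bar> * \<bar>q\<bar>" using abs_triangle_ineq[of "x*p" "y*q"] by (simp add: abs_mult)
  also have "\<dots> \<le> 1/2 * \<bar>p\<bar> + 1/2 * \<bar>q\<bar>" using assms by (intro add_mono mult_right_mono) auto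
  finally show ?thesis by simp
qed

lemma lin_aux: "(a::real) \<le> S / 2 \<Longrightarrow> S < L \<Longrightarrow> a < L / 2" by linarith

definition val3 :: "real \<Rightarrow> int \<Rightarrow> int \<Rightarrow> int \<Rightarrow> real" where
  "val3 r p0 p1 p2 = of_int p0 + of_int p1 * r + of_int p2 * r^2"

locale cub =
  fixes B C :: int and r1 r2 r3 :: real
  assumes f1: "r1^3 + of_int B * r1^2 - of_int C * r1 + 1 = 0"
  and f2: "r2^3 + of_int B * r2^2 - of_int C * r2 + 1 = 0"
  and f3: "r3^3 + of_int B * r3^2 - of_int C * r3 + 1 = 0"
  and d12: "r1 \<noteq> r2" and d13: "r1 \<noteq> r3" and d23: "r2 \<noteq> r3"
  and fone: "B - C + 2 \<noteq> 0" and fmone: "B + C \<noteq> 0"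
begin

lemma vieta: "r1 + r2 + r3 = - of_int B" "r1*r2 + r1*r3 + r2*r3 = - of_int C" "r1*r2*r3 = -1"
proof -
  have "(r1 - r2) * (r1^2 + r1*r2 + r2^2 + of_int B*(r1+r2) - of_int C) = 0"
    using f1 f2 by algebra
  hence h12: "r1^2 + r1*r2 + r2^2 + of_int B*(r1+r2) - of_int C = 0" using d12 by simp
  have "(r1 - r3) * (r1^2 + r1*r3 + r3^2 + of_int B*(r1+r3) - of_int C) = 0"
    using f1 f3 by algebra
  hence h13: "r1^2 + r1*r3 + r3^2 + of_int B*(r1+r3) - of_int C = 0" using d13 by simp
  have "(r2 - r3) * (r1 + r2 + r3 + of_int B) = 0" using h12 h13 by algebra
  thus s1: "r1 + r2 + r3 = - of_int B" using d23 by simp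
  show s2: "r1*r2 + r1*r3 + r2*r3 = - of_int C" using h12 s1 by algebra
  show "r1*r2*r3 = -1" using f1 s1 s2 by algebra
qed

lemma factor: "x^3 + of_int B * x^2 - of_int C * x + 1 = (x - r1)*(x - r2)*(x - r3)"
proof -
  have "x^3 + of_int B * x^2 - of_int C * x + 1 - (x - r1)*(x - r2)*(x - r3)
     = (of_int B + (r1+r2+r3)) * x^2 - (of_int C + (r1*r2 + r1*r3 + r2*r3)) * x + (1 + r1*r2*r3)"
    by (simp add: algebra_simps power2_eq_square power3_eq_cube)
  also have "\<dots> = 0" using vieta by simp
  finally show ?thesis by simp
qed

definition isroot :: "real \<Rightarrow> bool" where "isroot r \<longleftrightarrow> r^3 + of_int B * r^2 - of_int C * r + 1 = 0"

lemma isroot_iff: "isroot r \<longleftrightarrow> r = r1 \<or> r = r2 \<or> r = r3"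
  unfolding isroot_def factor by auto

lemma isroot_1: "isroot r1" and isroot_2: "isroot r2" and isroot_3: "isroot r3"
  by (auto simp: isroot_iff)

lemma irrat: assumes "isroot r" shows "r \<notin> \<rat>"
proof
  assume "r \<in> \<rat>"
  from no_rat_root[OF this fone fmone] assms show False unfolding isroot_def by simp
qed

lemma reduce: "\<exists>p0 p1 p2. \<forall>r. isroot r \<longrightarrow> poly (map_poly of_int P) r = val3 r p0 p1 p2"
proof (induction P)
  case 0
  show ?case by (rule exI[of _ 0], rule exI[of _ 0], rule exI[of _ 0]) (simp add: val3_def)
next
  case (pCons c P)
  then obtain q0 q1 q2 where q: "\<And>r. isroot r \<Longrightarrow> poly (map_poly of_int P) r = val3 r q0 q1 q2" by blast
  show ?case
  proof (rule exI[of _ "c - q2"], rule exI[of _ "q0 + C*q2"], rule exI[of _ "q1 - B*q2"], intro allI impI)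
    fix r :: real assume r: "isroot r"
    have r3: "r^3 = - of_int B * r^2 + of_int C * r - 1" using r unfolding isroot_def by linarith
    have "poly (map_poly of_int (pCons c P)) r = of_int c + r * poly (map_poly of_int P) r"
      by (simp add: map_poly_pCons)
    also have "\<dots> = of_int c + r * val3 r q0 q1 q2" using q r by simp
    also have "\<dots> = of_int c + of_int q0 * r + of_int q1 * r^2 + of_int q2 * r^3"
      by (simp add: val3_def algebra_simps power2_eq_square power3_eq_cube)
    also have "\<dots> = val3 r (c - q2) (q0 + C*q2) (q1 - B*q2)"
      unfolding r3 by (simp add: val3_def algebra_simps)
    finally show "poly (map_poly of_int (pCons c P)) r = val3 r (c - q2) (q0 + C*q2) (q1 - B*q2)" .
  qed
qed

lemma indep:
  assumes "val3 r1 p0 p1 p2 = 0" shows "p0 = 0 \<and> p1 = 0 \<and> p2 = 0"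
proof (cases "p2 = 0")
  case True
  show ?thesis
  proof (cases "p1 = 0")
    case True
    with \<open>p2 = 0\<close> assms show ?thesis by (simp add: val3_def)
  next
    case False
    have "r1 = - of_int p0 / of_int p1" using assms \<open>p2 = 0\<close> False
      by (simp add: val3_def field_simps)
    hence "r1 \<in> \<rat>" by simp
    with irrat isroot_1 show ?thesis by blast
  qed
next
  case False
  define k where "k = (of_int p1 / of_int p2 :: real)"
  define m where "m = (of_int p0 / of_int p2 :: real)"
  have kQ: "k \<in> \<rat>" and mQ: "m \<in> \<rat>" unfolding k_def m_def by simp_all
  have q: "r1^2 = - k * r1 - m" using assms False unfolding k_def m_def
    by (simp add: val3_def field_simps)
  define u where "u = k^2 - m - of_int B * k - of_int C"
  define v where "v = m*(k - of_int B) + 1"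
  have id: "\<And>x::real. x^3 + of_int B * x^2 - of_int C * x + 1 = (x^2 + k*x + m)*(x + of_int B - k) + u*x + v"
    unfolding u_def v_def by (simp add: algebra_simps power2_eq_square power3_eq_cube)
  have uv: "u * r1 + v = 0" using id[of r1] f1 q by simp
  show ?thesis
  proof (cases "u = 0")
    case True
    hence v0: "v = 0" using uv by simp
    have "isroot (k - of_int B)" unfolding isroot_def id using True v0 by simp
    moreover have "k - of_int B \<in> \<rat>" using kQ by simp
    ultimately show ?thesis using irrat by blast
  next
    case False
    have "r1 = - v / u" using uv False by (simp add: field_simps)
    moreover have "u \<in> \<rat>" "v \<in> \<rat>" unfolding u_def v_def using kQ mQ by simp_all
    ultimately have "r1 \<in> \<rat>" by simp
    with irrat isroot_1 show ?thesis by blast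
  qed
qed

lemma val3_eq_iff: "val3 r1 p0 p1 p2 = val3 r1 q0 q1 q2 \<longleftrightarrow> p0 = q0 \<and> p1 = q1 \<and> p2 = q2"
proof
  assume "val3 r1 p0 p1 p2 = val3 r1 q0 q1 q2"
  hence "val3 r1 (p0 - q0) (p1 - q1) (p2 - q2) = 0" by (simp add: val3_def algebra_simps)
  from indep[OF this] show "p0 = q0 \<and> p1 = q1 \<and> p2 = q2" by simp
qed simp

abbreviation "Ord \<equiv> Zadj r1"

lemma Zadj_iff: "x \<in> Ord \<longleftrightarrow> (\<exists>p0 p1 p2. x = val3 r1 p0 p1 p2)"
proof
  assume "x \<in> Ord"
  then obtain P where "x = poly (map_poly of_int P) r1" unfolding Zadj_def by blast
  with reduce[of P] isroot_1 show "\<exists>p0 p1 p2. x = val3 r1 p0 p1 p2" by blast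
next
  assume "\<exists>p0 p1 p2. x = val3 r1 p0 p1 p2"
  then obtain p0 p1 p2 where x: "x = val3 r1 p0 p1 p2" by blast
  have "x = poly (map_poly of_int [:p0, p1, p2:]) r1"
    unfolding x by (simp add: map_poly_pCons val3_def algebra_simps power2_eq_square)
  thus "x \<in> Ord" unfolding Zadj_def by blast
qed

definition crd :: "real \<Rightarrow> int \<times> int \<times> int" where
  "crd x = (SOME (p0, p1, p2). x = val3 r1 p0 p1 p2)"

definition sig :: "real \<Rightarrow> real \<Rightarrow> real" where
  "sig r x = (case crd x of (p0, p1, p2) \<Rightarrow> val3 r p0 p1 p2)"

lemma crd_eq: "crd (val3 r1 p0 p1 p2) = (p0, p1, p2)"
proof -
  have "\<exists>p. (case p of (q0, q1, q2) \<Rightarrow> val3 r1 p0 p1 p2 = val3 r1 q0 q1 q2)"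
    by (rule exI[of _ "(p0,p1,p2)"]) simp
  hence "case crd (val3 r1 p0 p1 p2) of (q0, q1, q2) \<Rightarrow> val3 r1 p0 p1 p2 = val3 r1 q0 q1 q2"
    unfolding crd_def by (rule someI_ex)
  thus ?thesis using val3_eq_iff by (cases "crd (val3 r1 p0 p1 p2)") auto
qed

lemma sig_val3: "sig r (val3 r1 p0 p1 p2) = val3 r p0 p1 p2"
  unfolding sig_def crd_eq by simp

lemma sig_1: "x \<in> Ord \<Longrightarrow> sig r1 x = x"
  using sig_val3 Zadj_iff by auto

definition "mul3 p0 p1 p2 q0 q1 q2 =
   (let c0 = p0*q0; c1 = p0*q1 + p1*q0; c2 = p0*q2 + p1*q1 + p2*q0; c3 = p1*q2 + p2*q1; c4 = p2*q2
    in (c0 - c3 + B*c4, c1 + C*c3 - (B*C + 1)*c4, c2 - B*c3 + (B^2 + C)*c4))"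

lemma mul3: assumes "isroot r"
  shows "val3 r p0 p1 p2 * val3 r q0 q1 q2 = (case mul3 p0 p1 p2 q0 q1 q2 of (c0, c1, c2) \<Rightarrow> val3 r c0 c1 c2)"
proof -
  have r3: "r^3 = - of_int B * r^2 + of_int C * r - 1" using assms unfolding isroot_def by linarith
  show ?thesis unfolding mul3_def Let_def val3_def of_int_add of_int_mult of_int_diff of_int_power prod.case of_int_1
    using r3 by algebra
qed

lemma O_mult_aux: assumes "x \<in> Ord" "y \<in> Ord"
  shows "x * y \<in> Ord \<and> (\<forall>r. isroot r \<longrightarrow> sig r (x * y) = sig r x * sig r y)"
proof -
  obtain p0 p1 p2 where x: "x = val3 r1 p0 p1 p2" using assms Zadj_iff by blast
  obtain q0 q1 q2 where y: "y = val3 r1 q0 q1 q2" using assms Zadj_iff by blast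
  obtain c0 c1 c2 where c: "mul3 p0 p1 p2 q0 q1 q2 = (c0, c1, c2)" by (cases "mul3 p0 p1 p2 q0 q1 q2") auto
  have xy: "x * y = val3 r1 c0 c1 c2" using mul3[OF isroot_1, of p0 p1 p2 q0 q1 q2] c x y by simp
  have "sig r (x * y) = sig r x * sig r y" if "isroot r" for r
  proof -
    have "sig r (x * y) = val3 r c0 c1 c2" using xy sig_val3 by simp
    moreover have "sig r x = val3 r p0 p1 p2" "sig r y = val3 r q0 q1 q2" using x y sig_val3 by simp_all
    ultimately show ?thesis using mul3[OF that, of p0 p1 p2 q0 q1 q2] c by simp
  qed
  then show ?thesis using xy Zadj_iff by blast
qed

lemma O_mult: "x \<in> Ord \<Longrightarrow> y \<in> Ord \<Longrightarrow> x * y \<in> Ord"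
  using O_mult_aux by blast

lemma sig_mult: "x \<in> Ord \<Longrightarrow> y \<in> Ord \<Longrightarrow> isroot r \<Longrightarrow> sig r (x * y) = sig r x * sig r y"
  using O_mult_aux by blast

lemma val3_in: "val3 r1 p0 p1 p2 \<in> Ord" using Zadj_iff by blast

lemma one_in: "1 \<in> Ord" and sig_one: "isroot r \<Longrightarrow> sig r 1 = 1"
proof -
  have e: "(1::real) = val3 r1 1 0 0" by (simp add: val3_def)
  show "1 \<in> Ord" by (subst e, rule val3_in)
  show "sig r 1 = 1" using sig_val3[of r 1 0 0] by (simp add: val3_def)
qed

lemma r1_in: "r1 \<in> Ord" and sig_r1: "sig r r1 = r"
proof -
  have e: "r1 = val3 r1 0 1 0" by (simp add: val3_def)
  show "r1 \<in> Ord" by (subst e, rule val3_in)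
  show "sig r r1 = r" using sig_val3[of r 0 1 0] by (simp add: val3_def)
qed

lemma unit_sig: assumes "u \<in> units_of_order Ord" "isroot r"
  shows "sig r u * sig r (inverse u) = 1"
proof -
  have "u \<in> Ord" "inverse u \<in> Ord" "u \<noteq> 0" using assms(1) unfolding units_of_order_def by auto
  hence "sig r (u * inverse u) = sig r u * sig r (inverse u)" using sig_mult assms(2) by blast
  thus ?thesis using \<open>u \<noteq> 0\<close> sig_one assms(2) by simp
qed

lemma unit_sig_nz: "u \<in> units_of_order Ord \<Longrightarrow> isroot r \<Longrightarrow> sig r u \<noteq> 0"
  using unit_sig by fastforce

lemma unit_sig_inv: "u \<in> units_of_order Ord \<Longrightarrow> isroot r \<Longrightarrow> sig r (inverse u) = inverse (sig r u)"
  using unit_sig by (metis inverse_unique)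

lemma unit_mult: assumes "u \<in> units_of_order Ord" "v \<in> units_of_order Ord"
  shows "u * v \<in> units_of_order Ord"
  using assms O_mult unfolding units_of_order_def by (auto simp: inverse_mult_distrib O_mult)

lemma unit_inverse: "u \<in> units_of_order Ord \<Longrightarrow> inverse u \<in> units_of_order Ord"
  unfolding units_of_order_def by auto

lemma unit_power: "u \<in> units_of_order Ord \<Longrightarrow> u ^ n \<in> units_of_order Ord"
  by (induction n) (auto simp: units_of_order_def one_in intro!: O_mult)

lemma sig_power: "u \<in> Ord \<Longrightarrow> isroot r \<Longrightarrow> sig r (u ^ n) = sig r u ^ n"
proof (induction n)
  case 0 thus ?case using sig_one by simp
next
  case (Suc n)
  have "u ^ n \<in> Ord" using Suc.prems by (induction n) (auto simp: one_in O_mult)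
  thus ?case using Suc sig_mult by simp
qed

lemma unit_powi: assumes "u \<in> units_of_order Ord" "isroot r"
  shows "u powi k \<in> units_of_order Ord \<and> sig r (u powi k) = sig r u powi k"
proof (cases "k \<ge> 0")
  case True
  then obtain n where k: "k = int n" by (metis nonneg_eq_int)
  have "u \<in> Ord" using assms unfolding units_of_order_def by auto
  thus ?thesis using k unit_power[OF assms(1)] sig_power assms(2) by simp
next
  case False
  then obtain n where k: "k = - int n" by (metis neg_int_cases less_le not_le add.inverse_inverse)
  have iu: "inverse u \<in> units_of_order Ord" using unit_inverse assms(1) by blast
  hence "inverse u \<in> Ord" unfolding units_of_order_def by auto
  have "u powi k = inverse u ^ n" using k by (simp add: power_int_minus power_inverse)
  moreover have "sig r u powi k = inverse (sig r u) ^ n" using k by (simp add: power_int_minus power_inverse)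
  ultimately show ?thesis using unit_power[OF iu] sig_power[OF \<open>inverse u \<in> Ord\<close> assms(2)]
      unit_sig_inv[OF assms] by simp
qed

definition normf :: "int \<Rightarrow> int \<Rightarrow> int \<Rightarrow> int" where
  "normf p0 p1 p2 = (let e1 = -B; e2 = -C; e3 = -1 in
     p2^3*e3^2 + p1*p2^2*e2*e3 + p0*p2^2*e2^2 + p1^2*p2*e1*e3 - 2*p0*p2^2*e1*e3 + p0*p1*p2*e1*e2
     + p0^2*p2*e1^2 + p1^3*e3 - 3*p0*p1*p2*e3 + p0*p1^2*e2 - 2*p0^2*p2*e2 + p0^2*p1*e1 + p0^3)"

lemma norm_formula: "val3 r1 p0 p1 p2 * val3 r2 p0 p1 p2 * val3 r3 p0 p1 p2 = of_int (normf p0 p1 p2)"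
proof -
  have bb: "of_int B = - (r1 + r2 + r3)" "of_int C = - (r1*r2 + r1*r3 + r2*r3)" "-1 = r1*r2*r3" using vieta by simp_all
  show ?thesis unfolding normf_def Let_def val3_def of_int_add of_int_mult of_int_diff of_int_power of_int_minus
     of_int_numeral of_int_1 bb by algebra
qed

lemma unit_norm: assumes "u \<in> units_of_order Ord"
  shows "\<bar>sig r1 u * sig r2 u * sig r3 u\<bar> = 1"
proof -
  have "u \<in> Ord" "inverse u \<in> Ord" using assms unfolding units_of_order_def by auto
  then obtain p0 p1 p2 q0 q1 q2 where u: "u = val3 r1 p0 p1 p2" and v: "inverse u = val3 r1 q0 q1 q2"
    using Zadj_iff by metis
  have "(sig r1 u * sig r2 u * sig r3 u) * (sig r1 (inverse u) * sig r2 (inverse u) * sig r3 (inverse u)) = 1"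
    using unit_sig[OF assms isroot_1] unit_sig[OF assms isroot_2] unit_sig[OF assms isroot_3]
    by (simp add: algebra_simps)
  hence "of_int (normf p0 p1 p2) * of_int (normf q0 q1 q2) = (1::real)"
    unfolding v unfolding u sig_val3 norm_formula .
  hence "normf p0 p1 p2 * normf q0 q1 q2 = 1" by (metis of_int_eq_1_iff of_int_mult)
  hence "\<bar>normf p0 p1 p2\<bar> = 1" using zdvd1_eq by (metis dvd_triv_left)
  thus ?thesis unfolding u sig_val3 norm_formula by simp
qed

definition "Dint p1 p2 = (let c = p1 - p2 * B in c^3 + c^2*p2*B - c*p2^2*C + p2^3)"

lemma Dint_formula: "(of_int p1 + of_int p2 * (r1 + r2)) * (of_int p1 + of_int p2 * (r1 + r3)) * (of_int p1 + of_int p2 * (r2 + r3)) = of_int (Dint p1 p2)"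
proof -
  have bb: "of_int B = - (r1 + r2 + r3)" "of_int C = - (r1*r2 + r1*r3 + r2*r3)" "-1 = r1*r2*r3" using vieta by simp_all
  show ?thesis unfolding Dint_def Let_def of_int_add of_int_mult of_int_diff of_int_power of_int_minus
     of_int_numeral of_int_1 using vieta by algebra
qed

lemma val3_diff: "val3 x p0 p1 p2 - val3 y p0 p1 p2 = (x - y) * (of_int p1 + of_int p2 * (x + y))"
  unfolding val3_def by (simp add: algebra_simps power2_eq_square)

lemma log_diff_le: fixes x y :: real assumes "x \<noteq> y" "x \<noteq> 0" "y \<noteq> 0"
  shows "ln \<bar>x - y\<bar> \<le> ln 2 + max (ln \<bar>x\<bar>) (ln \<bar>y\<bar>)"
proof -
  have "\<bar>x - y\<bar> \<le> 2 * max \<bar>x\<bar> \<bar>y\<bar>" using abs_triangle_ineq4[of x y] by (auto simp: max_def)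
  hence "ln \<bar>x - y\<bar> \<le> ln (2 * max \<bar>x\<bar> \<bar>y\<bar>)" using assms by simp
  also have "\<dots> = ln 2 + ln (max \<bar>x\<bar> \<bar>y\<bar>)" using assms by (simp add: ln_mult max_def)
  also have "ln (max \<bar>x\<bar> \<bar>y\<bar>) = max (ln \<bar>x\<bar>) (ln \<bar>y\<bar>)" using assms by (simp add: max_def)
  finally show ?thesis .
qed

lemma unit_spread:
  assumes u: "u \<in> units_of_order Ord" and n1: "u \<noteq> 1" and nm1: "u \<noteq> -1"
  shows "ln (((r1 - r2)*(r1 - r3)*(r2 - r3))^2) - 6 * ln 2
     \<le> 2 * max (abs (ln (abs (sig r1 u)) - ln (abs (sig r2 u)))) (max (abs (ln (abs (sig r1 u)) - ln (abs (sig r3 u)))) (abs (ln (abs (sig r2 u)) - ln (abs (sig r3 u)))))"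
proof -
  have "u \<in> Ord" using u unfolding units_of_order_def by auto
  then obtain p0 p1 p2 where uv: "u = val3 r1 p0 p1 p2" using Zadj_iff by metis
  define e1 where "e1 = sig r1 u"
  define e2 where "e2 = sig r2 u"
  define e3 where "e3 = sig r3 u"
  have ev: "e1 = val3 r1 p0 p1 p2" "e2 = val3 r2 p0 p1 p2" "e3 = val3 r3 p0 p1 p2"
    unfolding e1_def e2_def e3_def uv sig_val3 by simp_all
  have nz: "e1 \<noteq> 0" "e2 \<noteq> 0" "e3 \<noteq> 0" unfolding e1_def e2_def e3_def
    using unit_sig_nz[OF u] isroot_1 isroot_2 isroot_3 by auto
  have nrm: "\<bar>e1 * e2 * e3\<bar> = 1" unfolding e1_def e2_def e3_def by (rule unit_norm[OF u])
  have p12: "p1 \<noteq> 0 \<or> p2 \<noteq> 0"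
  proof (rule ccontr)
    assume "\<not> (p1 \<noteq> 0 \<or> p2 \<noteq> 0)"
    hence z: "p1 = 0" "p2 = 0" by auto
    have "e1 = of_int p0" "e2 = of_int p0" "e3 = of_int p0" using ev z by (simp_all add: val3_def)
    hence "\<bar>of_int p0 ^ 3\<bar> = (1::real)" using nrm by (simp add: power3_eq_cube)
    hence "\<bar>p0\<bar> ^ 3 = 1" by (metis power_abs of_int_abs of_int_eq_1_iff of_int_power)
    hence "\<bar>p0\<bar> ^ 3 = 1 ^ 3" by simp
    hence "\<bar>p0\<bar> = 1" using power_eq_imp_eq_base[of "\<bar>p0\<bar>" 3 1] by simp
    hence "u = 1 \<or> u = -1" unfolding uv z by (auto simp: val3_def abs_if split: if_splits)
    thus False using n1 nm1 by blast
  qed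
  have fnz: "of_int p1 + of_int p2 * (x + y) \<noteq> (0::real)" if xy: "x + y + z = - of_int B" "isroot z" for x y z
  proof
    assume h: "of_int p1 + of_int p2 * (x + y) = (0::real)"
    show False
    proof (cases "p2 = 0")
      case True thus False using h p12 by simp
    next
      case False
      have "of_int p2 * (z + of_int B) = (of_int p1 :: real)" using h xy(1) by algebra
      hence "z = - of_int B + of_int p1 / of_int p2" using False by (simp add: field_simps)
      hence "z \<in> \<rat>" by simp
      thus False using irrat xy(2) by blast
    qed
  qed
  have "Dint p1 p2 \<noteq> 0"
  proof
    assume "Dint p1 p2 = 0"
    hence "(of_int p1 + of_int p2 * (r1 + r2)) * (of_int p1 + of_int p2 * (r1 + r3)) * (of_int p1 + of_int p2 * (r2 + r3)) = (0::real)"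
      unfolding Dint_formula by simp
    moreover have "r1 + r2 + r3 = - of_int B" "r1 + r3 + r2 = - of_int B" "r2 + r3 + r1 = - of_int B" using vieta by linarith+
    ultimately show False using fnz isroot_1 isroot_2 isroot_3 by auto
  qed
  hence Dge: "\<bar>real_of_int (Dint p1 p2)\<bar> \<ge> 1" by linarith
  define V where "V = (r1 - r2)*(r1 - r3)*(r2 - r3)"
  have Vnz: "V \<noteq> 0" unfolding V_def using d12 d13 d23 by simp
  have prod: "(e1 - e2) * (e1 - e3) * (e2 - e3) = V * of_int (Dint p1 p2)"
    unfolding ev val3_diff V_def Dint_formula[symmetric] by (simp add: algebra_simps)
  have "\<bar>V\<bar> \<le> \<bar>V\<bar> * \<bar>real_of_int (Dint p1 p2)\<bar>" using Dge by (simp add: mult_le_cancel_left1)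
  also have "\<dots> = \<bar>V * of_int (Dint p1 p2)\<bar>" by (simp add: abs_mult)
  also have "\<dots> = \<bar>(e1 - e2) * (e1 - e3) * (e2 - e3)\<bar>" using prod by simp
  also have "\<dots> = \<bar>e1 - e2\<bar> * \<bar>e1 - e3\<bar> * \<bar>e2 - e3\<bar>" by (simp add: abs_mult)
  finally have Vle: "\<bar>V\<bar> \<le> \<bar>e1 - e2\<bar> * \<bar>e1 - e3\<bar> * \<bar>e2 - e3\<bar>" .
  have dnz: "e1 \<noteq> e2" "e1 \<noteq> e3" "e2 \<noteq> e3" using prod Vnz \<open>Dint p1 p2 \<noteq> 0\<close> by auto
  have "ln \<bar>V\<bar> \<le> ln (\<bar>e1 - e2\<bar> * \<bar>e1 - e3\<bar> * \<bar>e2 - e3\<bar>)" using Vle Vnz by simp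
  also have "\<dots> = ln \<bar>e1 - e2\<bar> + ln \<bar>e1 - e3\<bar> + ln \<bar>e2 - e3\<bar>" using dnz by (simp add: ln_mult)
  finally have lnV: "ln \<bar>V\<bar> \<le> ln \<bar>e1 - e2\<bar> + ln \<bar>e1 - e3\<bar> + ln \<bar>e2 - e3\<bar>" .
  have sum0: "ln \<bar>e1\<bar> + ln \<bar>e2\<bar> + ln \<bar>e3\<bar> = 0"
  proof -
    have "ln \<bar>e1\<bar> + ln \<bar>e2\<bar> + ln \<bar>e3\<bar> = ln \<bar>e1 * e2 * e3\<bar>" using nz by (simp add: ln_mult abs_mult)
    thus ?thesis using nrm by simp
  qed
  have V2: "ln (V^2) = 2 * ln \<bar>V\<bar>"
  proof -
    have "V^2 = \<bar>V\<bar>^2" by simp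
    thus ?thesis using Vnz ln_realpow[of "\<bar>V\<bar>" 2] by simp
  qed
  have l12: "ln \<bar>e1 - e2\<bar> \<le> ln 2 + max (ln \<bar>e1\<bar>) (ln \<bar>e2\<bar>)" using log_diff_le dnz nz by blast
  have l13: "ln \<bar>e1 - e3\<bar> \<le> ln 2 + max (ln \<bar>e1\<bar>) (ln \<bar>e3\<bar>)" using log_diff_le dnz nz by blast
  have l23: "ln \<bar>e2 - e3\<bar> \<le> ln 2 + max (ln \<bar>e2\<bar>) (ln \<bar>e3\<bar>)" using log_diff_le dnz nz by blast
  have "ln (V^2) - 6 * ln 2 \<le> 2 * max (abs (ln (abs e1) - ln (abs e2))) (max (abs (ln (abs e1) - ln (abs e3))) (abs (ln (abs e2) - ln (abs e3))))"
    using V2 lnV l12 l13 l23 max3_sum[OF sum0] by linarith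
  thus ?thesis unfolding V_def e1_def e2_def e3_def .
qed

lemma ln_sum0: assumes "u \<in> units_of_order Ord"
  shows "ln \<bar>sig r1 u\<bar> + ln \<bar>sig r2 u\<bar> + ln \<bar>sig r3 u\<bar> = 0"
proof -
  have nz: "sig r1 u \<noteq> 0" "sig r2 u \<noteq> 0" "sig r3 u \<noteq> 0"
    using unit_sig_nz[OF assms] isroot_1 isroot_2 isroot_3 by auto
  have "ln \<bar>sig r1 u\<bar> + ln \<bar>sig r2 u\<bar> + ln \<bar>sig r3 u\<bar> = ln \<bar>sig r1 u * sig r2 u * sig r3 u\<bar>"
    using nz by (simp add: ln_mult abs_mult)
  thus ?thesis using unit_norm[OF assms] by simp
qed

lemma fund:
  assumes tu: "r1 \<in> units_of_order Ord" and eu: "eta \<in> units_of_order Ord"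
  and Dnz: "ln (abs r1) * ln (abs (sig r2 eta)) - ln (abs r2) * ln (abs (sig r1 eta)) \<noteq> 0"
  and b12: "abs (ln (abs r1) - ln (abs r2)) + abs (ln (abs (sig r1 eta)) - ln (abs (sig r2 eta))) < ln (((r1 - r2)*(r1 - r3)*(r2 - r3))^2) - 6 * ln 2"
  and b13: "abs (ln (abs r1) - ln (abs r3)) + abs (ln (abs (sig r1 eta)) - ln (abs (sig r3 eta))) < ln (((r1 - r2)*(r1 - r3)*(r2 - r3))^2) - 6 * ln 2"
  and b23: "abs (ln (abs r2) - ln (abs r3)) + abs (ln (abs (sig r2 eta)) - ln (abs (sig r3 eta))) < ln (((r1 - r2)*(r1 - r3)*(r2 - r3))^2) - 6 * ln 2"
  shows "fundamental_units Ord r1 eta"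
  unfolding fundamental_units_def
proof (intro conjI tu eu ballI)
  fix u assume u: "u \<in> units_of_order Ord"
  define L where "L = ln (((r1 - r2)*(r1 - r3)*(r2 - r3))^2) - 6 * ln 2"
  define v1 where "v1 = ln \<bar>r1\<bar>"
  define v2 where "v2 = ln \<bar>r2\<bar>"
  define v3 where "v3 = ln \<bar>r3\<bar>"
  define w1 where "w1 = ln \<bar>sig r1 eta\<bar>"
  define w2 where "w2 = ln \<bar>sig r2 eta\<bar>"
  define w3 where "w3 = ln \<bar>sig r3 eta\<bar>"
  define l1 where "l1 = ln \<bar>sig r1 u\<bar>"
  define l2 where "l2 = ln \<bar>sig r2 u\<bar>"
  define l3 where "l3 = ln \<bar>sig r3 u\<bar>"
  have vs: "v1 + v2 + v3 = 0" using ln_sum0[OF tu] unfolding v1_def v2_def v3_def sig_r1 .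
  have ws: "w1 + w2 + w3 = 0" using ln_sum0[OF eu] unfolding w1_def w2_def w3_def .
  have ls: "l1 + l2 + l3 = 0" using ln_sum0[OF u] unfolding l1_def l2_def l3_def .
  define D where "D = v1 * w2 - v2 * w1"
  have D0: "D \<noteq> 0" using Dnz unfolding D_def v1_def v2_def w1_def w2_def .
  define x where "x = (l1 * w2 - l2 * w1) / D"
  define y where "y = (v1 * l2 - v2 * l1) / D"
  have c1: "x * v1 + y * w1 = l1"
  proof -
    have num: "(l1*w2 - l2*w1)*v1 + (v1*l2 - v2*l1)*w1 = l1 * D" unfolding D_def by (simp add: algebra_simps)
    have "x * v1 + y * w1 = ((l1*w2 - l2*w1)*v1 + (v1*l2 - v2*l1)*w1) / D"
      unfolding x_def y_def by (simp add: add_divide_distrib)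
    also have "\<dots> = l1" using num D0 by simp
    finally show ?thesis .
  qed
  have c2: "x * v2 + y * w2 = l2"
  proof -
    have num: "(l1*w2 - l2*w1)*v2 + (v1*l2 - v2*l1)*w2 = l2 * D" unfolding D_def by (simp add: algebra_simps)
    have "x * v2 + y * w2 = ((l1*w2 - l2*w1)*v2 + (v1*l2 - v2*l1)*w2) / D"
      unfolding x_def y_def by (simp add: add_divide_distrib)
    also have "\<dots> = l2" using num D0 by simp
    finally show ?thesis .
  qed
  define m where "m = round x"
  define n where "n = round y"
  have xm: "\<bar>x - of_int m\<bar> \<le> 1/2" unfolding m_def using of_int_round_abs_le[of x] by linarith
  have yn: "\<bar>y - of_int n\<bar> \<le> 1/2" unfolding n_def using of_int_round_abs_le[of y] by linarith
  define eps where "eps = u * r1 powi (-m) * eta powi (-n)"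
  have pu1: "r1 powi (-m) \<in> units_of_order Ord" using unit_powi[OF tu isroot_1] by blast
  have pu2: "eta powi (-n) \<in> units_of_order Ord" using unit_powi[OF eu isroot_1] by blast
  have epsu: "eps \<in> units_of_order Ord" unfolding eps_def by (intro unit_mult u pu1 pu2)
  have lneps: "ln (abs (sig r eps)) = ln (abs (sig r u)) - of_int m * ln (abs r) - of_int n * ln (abs (sig r eta))"
    if r: "isroot r" for r
  proof -
    have inO: "u \<in> Ord" "r1 powi (-m) \<in> Ord" "eta powi (-n) \<in> Ord"
      using u pu1 pu2 unfolding units_of_order_def by auto
    have nz: "sig r u \<noteq> 0" "r \<noteq> 0" "sig r eta \<noteq> 0"
      using unit_sig_nz[OF u r] unit_sig_nz[OF tu r] unit_sig_nz[OF eu r] sig_r1 by auto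
    have "sig r eps = sig r (u * r1 powi (-m)) * sig r (eta powi (-n))"
      unfolding eps_def by (rule sig_mult[OF O_mult[OF inO(1,2)] inO(3) r])
    also have "sig r (u * r1 powi (-m)) = sig r u * sig r (r1 powi (-m))" by (rule sig_mult[OF inO(1,2) r])
    finally have "sig r eps = sig r u * sig r (r1 powi (-m)) * sig r (eta powi (-n))" .
    also have "\<dots> = sig r u * r powi (-m) * sig r eta powi (-n)"
      using unit_powi[OF tu r] unit_powi[OF eu r] sig_r1 by simp
    finally have "ln \<bar>sig r eps\<bar> = ln (\<bar>sig r u\<bar> * \<bar>r powi (-m)\<bar> * \<bar>sig r eta powi (-n)\<bar>)" by (simp add: abs_mult)
    also have "\<dots> = ln \<bar>sig r u\<bar> + ln \<bar>r powi (-m)\<bar> + ln \<bar>sig r eta powi (-n)\<bar>"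
      using nz by (simp add: ln_mult)
    also have "\<dots> = ln (abs (sig r u)) - of_int m * ln (abs r) - of_int n * ln (abs (sig r eta))"
      using nz by (simp add: ln_abs_powi)
    finally show ?thesis .
  qed
  define e1 where "e1 = ln \<bar>sig r1 eps\<bar>"
  define e2 where "e2 = ln \<bar>sig r2 eps\<bar>"
  define e3 where "e3 = ln \<bar>sig r3 eps\<bar>"
  have e1v: "e1 = (x - of_int m) * v1 + (y - of_int n) * w1"
    using lneps[OF isroot_1] c1 unfolding e1_def l1_def v1_def w1_def by (simp add: algebra_simps)
  have e2v: "e2 = (x - of_int m) * v2 + (y - of_int n) * w2"
    using lneps[OF isroot_2] c2 unfolding e2_def l2_def v2_def w2_def by (simp add: algebra_simps)
  have e3': "e3 = l3 - of_int m * v3 - of_int n * w3"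
    using lneps[OF isroot_3] unfolding e3_def l3_def v3_def w3_def by simp
  have e3v: "e3 = (x - of_int m) * v3 + (y - of_int n) * w3"
    using e3' vs ws ls c1 c2 by algebra
  have d12: "\<bar>e1 - e2\<bar> \<le> (\<bar>v1 - v2\<bar> + \<bar>w1 - w2\<bar>) / 2"
  proof -
    have "e1 - e2 = (x - of_int m) * (v1 - v2) + (y - of_int n) * (w1 - w2)" unfolding e1v e2v by (simp add: algebra_simps)
    thus ?thesis using half_bound[OF xm yn] by simp
  qed
  have d13: "\<bar>e1 - e3\<bar> \<le> (\<bar>v1 - v3\<bar> + \<bar>w1 - w3\<bar>) / 2"
  proof -
    have "e1 - e3 = (x - of_int m) * (v1 - v3) + (y - of_int n) * (w1 - w3)" unfolding e1v e3v by (simp add: algebra_simps)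
    thus ?thesis using half_bound[OF xm yn] by simp
  qed
  have d23: "\<bar>e2 - e3\<bar> \<le> (\<bar>v2 - v3\<bar> + \<bar>w2 - w3\<bar>) / 2"
  proof -
    have "e2 - e3 = (x - of_int m) * (v2 - v3) + (y - of_int n) * (w2 - w3)" unfolding e2v e3v by (simp add: algebra_simps)
    thus ?thesis using half_bound[OF xm yn] by simp
  qed
  have "eps = 1 \<or> eps = -1"
  proof (rule ccontr)
    assume "\<not> (eps = 1 \<or> eps = -1)"
    hence ne: "eps \<noteq> 1" "eps \<noteq> -1" by auto
    have "L \<le> 2 * max \<bar>e1 - e2\<bar> (max \<bar>e1 - e3\<bar> \<bar>e2 - e3\<bar>)"
      unfolding L_def e1_def e2_def e3_def by (rule unit_spread[OF epsu ne])
    moreover have "2 * max \<bar>e1 - e2\<bar> (max \<bar>e1 - e3\<bar> \<bar>e2 - e3\<bar>) < L"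
    proof -
      have "\<bar>e1 - e2\<bar> < L / 2" unfolding L_def
        by (rule lin_aux[OF d12[unfolded v1_def v2_def v3_def w1_def w2_def w3_def] b12])
      moreover have "\<bar>e1 - e3\<bar> < L / 2" unfolding L_def
        by (rule lin_aux[OF d13[unfolded v1_def v2_def v3_def w1_def w2_def w3_def] b13])
      moreover have "\<bar>e2 - e3\<bar> < L / 2" unfolding L_def
        by (rule lin_aux[OF d23[unfolded v1_def v2_def v3_def w1_def w2_def w3_def] b23])
      ultimately have "max \<bar>e1 - e2\<bar> (max \<bar>e1 - e3\<bar> \<bar>e2 - e3\<bar>) < L / 2" by simp
      thus ?thesis by linarith
    qed
    ultimately show False by linarith
  qed
  then obtain s :: real where s: "s = 1 \<or> s = -1" "eps = s" by blast
  have nz: "r1 \<noteq> 0" "eta \<noteq> 0" using tu eu unfolding units_of_order_def by auto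
  have a: "r1 powi (-m) * r1 powi m = 1" using nz by (simp add: power_int_minus)
  have b: "eta powi (-n) * eta powi n = 1" using nz by (simp add: power_int_minus)
  have "eps * r1 powi m * eta powi n = u * (r1 powi (-m) * r1 powi m) * (eta powi (-n) * eta powi n)"
    unfolding eps_def by (simp only: mult_ac)
  hence "u = eps * r1 powi m * eta powi n" unfolding a b by simp
  thus "\<exists>(m::int) (n::int) (s::real). (s = 1 \<or> s = -1) \<and> u = s * r1 powi m * eta powi n"
    using s by blast
qed

end



lemma fpoly_eq: "f_poly t a = [:1, -(a^4 - a + t), a*(a^4 - 2*a + t), 1:]"
  unfolding f_poly_def
  by (simp add: eval_nat_numeral monom_Suc monom_0 one_pCons algebra_simps smult_add_right power2_eq_square power3_eq_cube flip: pCons_one)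

lemma fpoly_eval: "poly (map_poly of_int (f_poly t a)) x = x^3 + of_int (a*(a^4 - 2*a + t)) * x^2 - of_int (a + (a^4 - 2*a + t)) * x + 1"
  unfolding fpoly_eq by (simp add: map_poly_pCons algebra_simps power2_eq_square power3_eq_cube)

lemma root_between:
  fixes B C lo hi :: real
  assumes "lo < hi" and sg: "(lo^3 + B*lo^2 - C*lo + 1) * (hi^3 + B*hi^2 - C*hi + 1) < 0"
  shows "\<exists>r. lo < r \<and> r < hi \<and> r^3 + B*r^2 - C*r + 1 = 0"
proof -
  define g where "g x = x^3 + B*x^2 - C*x + 1" for x
  have cont: "continuous_on {lo..hi} g" unfolding g_def by (intro continuous_intros)
  have "\<exists>r. lo \<le> r \<and> r \<le> hi \<and> g r = 0"
  proof (cases "g lo < 0")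
    case True
    hence "g hi > 0" using sg unfolding g_def by (simp add: mult_less_0_iff)
    thus ?thesis using IVT'[of g lo 0 hi, OF _ _ _ cont] True assms(1) by simp
  next
    case False
    hence "g lo > 0" "g hi < 0" using sg unfolding g_def by (auto simp add: mult_less_0_iff)
    thus ?thesis using IVT2'[of g hi 0 lo, OF _ _ _ cont] assms(1) by simp
  qed
  then obtain r where r: "lo \<le> r" "r \<le> hi" "g r = 0" by blast
  have "g lo \<noteq> 0" "g hi \<noteq> 0" using sg unfolding g_def by auto
  hence "r \<noteq> lo" "r \<noteq> hi" using r by auto
  thus ?thesis using r unfolding g_def by (intro exI[of _ r]) auto
qed

lemma roots_exist:
  fixes a b :: real
  assumes a1: "a \<ge> 1" and bb: "b \<ge> 262144 * a^4"
  shows "\<exists>r1 r2 r3.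
     (\<forall>r\<in>{r1,r2,r3}. r^3 + (a*b)*r^2 - (a+b)*r + 1 = 0) \<and>
     1/b < r1 \<and> r1 < 2/b \<and> 1/(2*a) < r2 \<and> r2 < 1/a \<and> - (a*b) - 2 < r3 \<and> r3 < - (a*b)"
proof -
  have a4: "a^4 \<ge> a"
  proof -
    have "a^3 \<ge> 1" using a1 by (simp add: one_le_power)
    hence "a * a^3 \<ge> a * 1" using a1 by (intro mult_left_mono) auto
    thus ?thesis by (simp add: power_numeral_reduce)
  qed
  have b8a: "b \<ge> 8 * a" using bb a4 a1 by linarith
  have bpos: "b > 0" using b8a a1 by linarith
  have apos: "a > 0" using a1 by linarith
  have gform: "\<And>x. x^3 + (a*b)*x^2 - (a+b)*x + 1 = x^3 + (1 - a*x)*(1 - b*x)"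
    by (simp add: algebra_simps power2_eq_square)
  have g1: "(1/b)^3 + (a*b)*(1/b)^2 - (a+b)*(1/b) + 1 = 1/b^3"
    unfolding gform using bpos by (simp add: field_simps power3_eq_cube)
  have g2: "(2/b)^3 + (a*b)*(2/b)^2 - (a+b)*(2/b) + 1 = 8/b^3 + 2*a/b - 1"
    unfolding gform using bpos by (simp add: field_simps power3_eq_cube)
  have "8/b^3 \<le> 1/8"
  proof -
    have "b \<ge> 4" using b8a a1 by linarith
    hence "b^3 \<ge> 4^3" by (rule power_mono) simp
    hence "b^3 \<ge> 64" by simp
    thus ?thesis using bpos by (simp add: divide_simps)
  qed
  moreover have "2*a/b \<le> 1/4" using b8a bpos by (simp add: divide_simps)
  ultimately have g2n: "8/b^3 + 2*a/b - 1 < 0" by linarith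
  have "((1/b)^3 + (a*b)*(1/b)^2 - (a+b)*(1/b) + 1) * ((2/b)^3 + (a*b)*(2/b)^2 - (a+b)*(2/b) + 1) < 0"
    unfolding g1 g2 using g2n bpos by (intro mult_pos_neg) auto
  moreover have "1/b < 2/b" using bpos by (simp add: divide_strict_right_mono)
  ultimately obtain r1 where r1: "1/b < r1" "r1 < 2/b" "r1^3 + (a*b)*r1^2 - (a+b)*r1 + 1 = 0"
    using root_between by blast
  have h1: "(1/(2*a))^3 + (a*b)*(1/(2*a))^2 - (a+b)*(1/(2*a)) + 1 = 1/(8*a^3) + 1/2 - b/(4*a)"
    unfolding gform using apos by (simp add: field_simps power3_eq_cube)
  have h2: "(1/a)^3 + (a*b)*(1/a)^2 - (a+b)*(1/a) + 1 = 1/a^3"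
    unfolding gform using apos by (simp add: field_simps power3_eq_cube)
  have "1/(8*a^3) \<le> 1/8" using a1 by (simp add: divide_simps one_le_power)
  moreover have "b/(4*a) \<ge> 2" using b8a apos by (simp add: divide_simps)
  ultimately have h1n: "1/(8*a^3) + 1/2 - b/(4*a) < 0" by linarith
  have "((1/(2*a))^3 + (a*b)*(1/(2*a))^2 - (a+b)*(1/(2*a)) + 1) * ((1/a)^3 + (a*b)*(1/a)^2 - (a+b)*(1/a) + 1) < 0"
    unfolding h1 h2 using h1n apos by (intro mult_neg_pos) auto
  moreover have "1/(2*a) < 1/a" using apos by (simp add: divide_simps)
  ultimately obtain r2 where r2: "1/(2*a) < r2" "r2 < 1/a" "r2^3 + (a*b)*r2^2 - (a+b)*r2 + 1 = 0"
    using root_between by blast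
  define B where "B = a*b"
  have ab1: "a * b \<ge> b" using a1 bpos by (simp add: mult_le_cancel_right1)
  have ab2: "a * b \<ge> a" using b8a a1 apos by (simp add: mult_le_cancel_left1)
  have Bpos: "B \<ge> 1" unfolding B_def using ab2 a1 by linarith
  have CB: "a + b \<le> 2 * B" unfolding B_def using ab1 ab2 by linarith
  have k1: "(- B - 2)^3 + B*(- B - 2)^2 - (a+b)*(- B - 2) + 1 = (B + 2)*((a+b) - 2*B - 4) + 1"
    by (simp add: algebra_simps power2_eq_square power3_eq_cube)
  have k2: "(- B)^3 + B*(- B)^2 - (a+b)*(- B) + 1 = (a+b)*B + 1"
    by (simp add: algebra_simps power2_eq_square power3_eq_cube)
  have k1n: "(B + 2)*((a+b) - 2*B - 4) + 1 < 0"
  proof -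
    have "(B + 2)*((a+b) - 2*B - 4) \<le> (B+2) * (-4)" using CB Bpos by (intro mult_left_mono) auto
    moreover have "(B+2)*(-4) = -4*B - 8" by simp
    ultimately show ?thesis using Bpos by linarith
  qed
  have k2p: "(a+b)*B + 1 > 0" using Bpos apos bpos by (simp add: add_pos_pos)
  have "((- B - 2)^3 + B*(- B - 2)^2 - (a+b)*(- B - 2) + 1) * ((- B)^3 + B*(- B)^2 - (a+b)*(- B) + 1) < 0"
    unfolding k1 k2 using k1n k2p by (intro mult_neg_pos) auto
  moreover have "- B - 2 < - B" by simp
  ultimately obtain r3 where r3: "- B - 2 < r3" "r3 < - B" "r3^3 + B*r3^2 - (a+b)*r3 + 1 = 0"
    using root_between by blast
  show ?thesis using r1 r2 r3 unfolding B_def by (intro exI[of _ r1] exI[of _ r2] exI[of _ r3]) auto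
qed


lemma ln_lt_bounds: fixes x lo hi :: real assumes "0 < lo" "lo < x" "x < hi" shows "ln lo < ln x" "ln x < ln hi"
  using assms by simp_all

lemma numeric:
  fixes a b r1 r2 r3 :: real
  assumes a1: "a \<ge> 1" and bb: "b \<ge> 262144 * a^4"
  and f1: "r1^3 + (a*b)*r1^2 - (a+b)*r1 + 1 = 0"
  and f2: "r2^3 + (a*b)*r2^2 - (a+b)*r2 + 1 = 0"
  and f3: "r3^3 + (a*b)*r3^2 - (a+b)*r3 + 1 = 0"
  and i1: "1/b < r1" "r1 < 2/b" and i2: "1/(2*a) < r2" "r2 < 1/a" and i3: "- (a*b) - 2 < r3" "r3 < - (a*b)"
  shows "ln (abs r1) * ln (abs (a*r2 - 1)) - ln (abs r2) * ln (abs (a*r1 - 1)) \<noteq> 0"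
    "abs (ln (abs r1) - ln (abs r2)) + abs (ln (abs (a*r1 - 1)) - ln (abs (a*r2 - 1))) < ln (((r1 - r2)*(r1 - r3)*(r2 - r3))^2) - 6 * ln 2"
    "abs (ln (abs r1) - ln (abs r3)) + abs (ln (abs (a*r1 - 1)) - ln (abs (a*r3 - 1))) < ln (((r1 - r2)*(r1 - r3)*(r2 - r3))^2) - 6 * ln 2"
    "abs (ln (abs r2) - ln (abs r3)) + abs (ln (abs (a*r2 - 1)) - ln (abs (a*r3 - 1))) < ln (((r1 - r2)*(r1 - r3)*(r2 - r3))^2) - 6 * ln 2"
proof -
  have apos: "a > 0" using a1 by linarith
  have a4: "a^4 \<ge> a"
  proof -
    have "a^3 \<ge> 1" using a1 by (simp add: one_le_power)
    hence "a * a^3 \<ge> a * 1" using a1 by (intro mult_left_mono) auto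
    thus ?thesis by (simp add: power_numeral_reduce)
  qed
  have b8a: "b \<ge> 8 * a" using bb a4 a1 by linarith
  have bpos: "b > 0" using b8a a1 by linarith
  define La where "La = ln a"
  define Lb where "Lb = ln b"
  define l2 where "l2 = ln (2::real)"
  have l2pos: "l2 > 0" unfolding l2_def by simp
  have La0: "La \<ge> 0" unfolding La_def using a1 by simp
  have LbLa: "Lb \<ge> 4 * La + 18 * l2"
  proof -
    have "ln (262144 * a^4) \<le> ln b" using bb apos bpos by (intro ln_le_cancel_iff[THEN iffD2]) auto
    moreover have "ln (262144 * a^4) = 18 * l2 + 4 * La"
    proof -
      have "ln (262144::real) = 18 * l2" unfolding l2_def using ln_realpow[of 2 18] by simp
      moreover have "ln (a^4) = 4 * La" unfolding La_def using apos by (simp add: ln_realpow)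
      ultimately show ?thesis using apos by (simp add: ln_mult)
    qed
    ultimately show ?thesis unfolding Lb_def by linarith
  qed
  define B where "B = a * b"
  have lnB: "ln B = La + Lb" unfolding B_def La_def Lb_def using apos bpos by (simp add: ln_mult)
  have ab2: "a * b \<ge> a" using b8a a1 apos by (simp add: mult_le_cancel_left1)
  have B1: "B \<ge> 1" unfolding B_def using ab2 a1 by linarith
  have ab1: "a * b \<ge> b" using a1 bpos by (simp add: mult_le_cancel_right1)
  have B8: "B \<ge> 8" unfolding B_def using ab1 b8a a1 by linarith
  have r1pos: "r1 > 0" using i1 bpos by (smt (verit) divide_pos_pos)
  have v1l: "ln (abs r1) > - Lb" using ln_lt_bounds(1)[OF _ i1] bpos r1pos unfolding Lb_def by (simp add: ln_div)
  have v1u: "ln (abs r1) < l2 - Lb" using ln_lt_bounds(2)[OF _ i1] bpos r1pos unfolding Lb_def l2_def by (simp add: ln_div)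
  have ar1: "a * r1 < 1/4"
  proof -
    have "a * r1 < a * (2/b)" by (rule mult_strict_left_mono[OF i1(2) apos])
    also have "a * (2/b) \<le> 1/4" using b8a bpos by (simp add: divide_simps)
    finally show ?thesis .
  qed
  have w1l: "ln (abs (a*r1 - 1)) > - l2"
  proof -
    have "abs (a*r1 - 1) = 1 - a*r1" using ar1 by simp
    moreover have "ln (1/2) < ln (1 - a*r1)" using ar1 by (intro ln_less_cancel_iff[THEN iffD2]) auto
    ultimately show ?thesis unfolding l2_def by (simp add: ln_div)
  qed
  have w1u: "ln (abs (a*r1 - 1)) < 0"
  proof -
    have "abs (a*r1 - 1) = 1 - a*r1" using ar1 by simp
    moreover have "a * r1 > 0" using apos r1pos by simp
    ultimately show ?thesis using ar1 by simp
  qed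
  have r2pos: "r2 > 0" using i2 apos by (smt (verit) divide_pos_pos)
  have v2l: "ln (abs r2) > - l2 - La" using ln_lt_bounds(1)[OF _ i2] apos r2pos unfolding La_def l2_def by (simp add: ln_div ln_mult)
  have v2u: "ln (abs r2) < - La" using ln_lt_bounds(2)[OF _ i2] apos r2pos unfolding La_def by (simp add: ln_div)
  define rho where "rho = a * r2"
  have rho: "1/2 < rho" "rho < 1" unfolding rho_def using i2 apos by (simp_all add: field_simps)
  define s where "s = 1 - rho"
  have spos: "s > 0" unfolding s_def using rho by simp
  have eq2: "(s * a^2) * (b * rho - a) = rho^3"
  proof -
    have "a^3 * (r2^3 + (a*b)*r2^2 - (a+b)*r2 + 1) = 0" using f2 by simp
    thus ?thesis unfolding s_def rho_def by (simp add: algebra_simps power2_eq_square power3_eq_cube)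
  qed
  have X: "s * a^2 > 0" using spos apos by simp
  have bl: "b / 4 < b * rho - a"
  proof -
    have "b * (1/2) < b * rho" using rho bpos by simp
    thus ?thesis using b8a apos by linarith
  qed
  have bu: "b * rho - a < b" using rho bpos apos by (smt (verit) mult_less_cancel_left2)
  have up: "(s * a^2) * (b/4) < 1"
  proof -
    have "(s * a^2) * (b/4) < (s * a^2) * (b * rho - a)" by (rule mult_strict_left_mono[OF bl X])
    also have "\<dots> = rho^3" by (rule eq2)
    also have "\<dots> < 1" using rho by (simp add: power_less_one_iff)
    finally show ?thesis .
  qed
  have lo: "(s * a^2) * b > 1/8"
  proof -
    have "(1/2)^3 < rho^3" using rho by (intro power_strict_mono) auto
    hence "1/8 < rho^3" by (simp add: power_divide)
    also have "\<dots> = (s * a^2) * (b * rho - a)" by (rule eq2[symmetric])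
    also have "\<dots> < (s * a^2) * b" by (rule mult_strict_left_mono[OF bu X])
    finally show ?thesis .
  qed
  have lns: "ln (s * a^2 * b) = ln (abs (a*r2 - 1)) + 2 * La + Lb"
  proof -
    have "abs (a*r2 - 1) = s" unfolding s_def rho_def using rho unfolding rho_def by simp
    moreover have "ln (s * a^2 * b) = ln s + 2 * ln a + ln b" using spos apos bpos by (simp add: ln_mult ln_realpow)
    ultimately show ?thesis unfolding La_def Lb_def by simp
  qed
  have w2u: "ln (abs (a*r2 - 1)) < 2 * l2 - 2 * La - Lb"
  proof -
    have "ln (s * a^2 * b) < ln 4" using up X bpos by (intro ln_less_cancel_iff[THEN iffD2]) auto
    moreover have "ln (4::real) = 2 * l2" unfolding l2_def using ln_realpow[of 2 2] by simp
    ultimately show ?thesis using lns by linarith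
  qed
  have w2l: "ln (abs (a*r2 - 1)) > - 3 * l2 - 2 * La - Lb"
  proof -
    have "ln (1/8) < ln (s * a^2 * b)" using lo by (intro ln_less_cancel_iff[THEN iffD2]) auto
    moreover have "ln (1/8::real) = - 3 * l2" unfolding l2_def using ln_realpow[of 2 3] by (simp add: ln_div)
    ultimately show ?thesis using lns by linarith
  qed
  have r3a: "abs r3 = - r3" using i3 B1 unfolding B_def by linarith
  have v3l: "ln (abs r3) > La + Lb"
  proof -
    have "ln B < ln (abs r3)" using r3a i3 B1 unfolding B_def by (intro ln_less_cancel_iff[THEN iffD2]) auto
    thus ?thesis using lnB by simp
  qed
  have v3u: "ln (abs r3) < l2 + La + Lb"
  proof -
    have "ln (abs r3) < ln (2 * B)" using r3a i3 B8 unfolding B_def by (intro ln_less_cancel_iff[THEN iffD2]) auto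
    thus ?thesis using lnB B1 unfolding l2_def by (simp add: ln_mult)
  qed
  have e3a: "abs (a*r3 - 1) = 1 + a * abs r3"
  proof -
    have "a * r3 < 0" using apos i3 B1 unfolding B_def by (simp add: mult_pos_neg)
    thus ?thesis using r3a by simp
  qed
  have w3l: "ln (abs (a*r3 - 1)) > 2 * La + Lb"
  proof -
    have "B < abs r3" using r3a i3 unfolding B_def by linarith
    hence m: "a * B < a * abs r3" by (rule mult_strict_left_mono) (rule apos)
    have pos: "0 < a * B" using apos B1 by simp
    have nn: "0 \<le> a * abs r3" using apos by simp
    have "ln (a * B) < ln (abs (a*r3 - 1))"
      by (rule ln_less_cancel_iff[THEN iffD2]) (insert m pos e3a nn, auto)
    thus ?thesis using lnB apos B1 unfolding La_def by (simp add: ln_mult)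
  qed
  have w3u: "ln (abs (a*r3 - 1)) < 2 * l2 + 2 * La + Lb"
  proof -
    have "abs r3 < B + 2" using r3a i3 unfolding B_def by linarith
    hence "a * abs r3 < a * (B + 2)" by (rule mult_strict_left_mono) (rule apos)
    moreover have "1 + a * (B + 2) \<le> 4 * (a * B)"
    proof -
      have h: "a * B \<ge> a * 8" using B8 apos by (intro mult_left_mono) auto
      have "1 + a*(B+2) = 1 + a*B + 2*a" by (simp add: algebra_simps)
      thus ?thesis using h a1 by linarith
    qed
    ultimately have "abs (a*r3 - 1) < 4 * (a * B)" using e3a by linarith
    moreover have "abs (a*r3 - 1) > 0"
    proof -
      have "0 \<le> a * abs r3" using apos by simp
      thus ?thesis using e3a by linarith
    qed
    ultimately have "ln (abs (a*r3 - 1)) < ln (4 * (a * B))" by simp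
    moreover have "ln (4 * (a * B)) = 2 * l2 + La + ln B" unfolding l2_def La_def using apos B1 ln_realpow[of 2 2] by (simp add: ln_mult)
    ultimately show ?thesis using lnB by linarith
  qed
  have d12: "ln (abs (r1 - r2)) > - 2 * l2 - La"
  proof -
    have "2 / b \<le> 1 / (4 * a)" using b8a apos bpos by (simp add: divide_simps)
    moreover have "1/(2*a) = 2 * (1/(4*a))" using apos by (simp add: field_simps)
    ultimately have "1 / (4 * a) < r2 - r1" using i1 i2 by linarith
    hence "ln (1 / (4 * a)) < ln (abs (r1 - r2))" using apos by (intro ln_less_cancel_iff[THEN iffD2]) auto
    moreover have "ln (1 / (4 * a)) = - 2 * l2 - La" unfolding l2_def La_def using apos ln_realpow[of 2 2] by (simp add: ln_div ln_mult)
    ultimately show ?thesis by linarith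
  qed
  have d13: "ln (abs (r1 - r3)) > La + Lb"
  proof -
    have "B < abs (r1 - r3)" using r1pos i3 unfolding B_def by linarith
    hence "ln B < ln (abs (r1 - r3))" using B1 by (intro ln_less_cancel_iff[THEN iffD2]) auto
    thus ?thesis using lnB by simp
  qed
  have d23: "ln (abs (r2 - r3)) > La + Lb"
  proof -
    have "B < abs (r2 - r3)" using r2pos i3 unfolding B_def by linarith
    hence "ln B < ln (abs (r2 - r3))" using B1 by (intro ln_less_cancel_iff[THEN iffD2]) auto
    thus ?thesis using lnB by simp
  qed
  have r12: "r1 < r2"
  proof -
    have "2 / b \<le> 1 / (4 * a)" using b8a apos bpos by (simp add: divide_simps)
    moreover have "1/(2*a) = 2 * (1/(4*a))" using apos by (simp add: field_simps)
    moreover have "1/(4*a) > 0" using apos by simp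
    ultimately show ?thesis using i1 i2 by linarith
  qed
  have dne: "r1 \<noteq> r2" "r1 \<noteq> r3" "r2 \<noteq> r3" using r12 r1pos r2pos i3 B1 unfolding B_def by auto
  have disc: "ln (((r1 - r2)*(r1 - r3)*(r2 - r3))^2) = 2 * (ln (abs (r1 - r2)) + ln (abs (r1 - r3)) + ln (abs (r2 - r3)))"
  proof -
    have "((r1 - r2)*(r1 - r3)*(r2 - r3))^2 = (abs (r1 - r2) * abs (r1 - r3) * abs (r2 - r3))^2"
      by (simp add: abs_mult power_mult_distrib)
    moreover have "ln ((abs (r1 - r2) * abs (r1 - r3) * abs (r2 - r3))^2) = 2 * ln (abs (r1 - r2) * abs (r1 - r3) * abs (r2 - r3))"
      using dne by (simp add: ln_realpow)
    moreover have "ln (abs (r1 - r2) * abs (r1 - r3) * abs (r2 - r3)) = ln (abs (r1 - r2)) + ln (abs (r1 - r3)) + ln (abs (r2 - r3))"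
      using dne by (simp add: ln_mult)
    ultimately show ?thesis by simp
  qed
  have LD: "ln (((r1 - r2)*(r1 - r3)*(r2 - r3))^2) > 2*La + 4*Lb - 4*l2"
  proof -
    have S: "ln (abs (r1 - r2)) + ln (abs (r1 - r3)) + ln (abs (r2 - r3)) > La + 2*Lb - 2*l2"
      using d12 d13 d23 by linarith
    hence "2 * (ln (abs (r1 - r2)) + ln (abs (r1 - r3)) + ln (abs (r2 - r3))) > 2 * (La + 2*Lb - 2*l2)" by simp
    moreover have "2 * (La + 2*Lb - 2*l2) = 2*La + 4*Lb - 4*l2" by (simp add: algebra_simps)
    ultimately show ?thesis unfolding disc by linarith
  qed
  have l2d: "ln 2 = l2" unfolding l2_def ..
  have A1: "abs (ln (abs r1) - ln (abs r2)) < Lb - La" unfolding abs_less_iff using v1l v1u v2l v2u LbLa La0 l2pos by linarith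
  have A2: "abs (ln (abs (a*r1 - 1)) - ln (abs (a*r2 - 1))) < 3*l2 + 2*La + Lb" unfolding abs_less_iff using w1l w1u w2l w2u LbLa La0 l2pos by linarith
  show "abs (ln (abs r1) - ln (abs r2)) + abs (ln (abs (a*r1 - 1)) - ln (abs (a*r2 - 1))) < ln (((r1 - r2)*(r1 - r3)*(r2 - r3))^2) - 6 * ln 2"
    unfolding l2d using A1 A2 LD LbLa La0 l2pos by linarith
  have A3: "abs (ln (abs r1) - ln (abs r3)) < 2*Lb + La + l2" unfolding abs_less_iff using v1l v1u v3l v3u LbLa La0 l2pos by linarith
  have A4: "abs (ln (abs (a*r1 - 1)) - ln (abs (a*r3 - 1))) < 3*l2 + 2*La + Lb" unfolding abs_less_iff using w1l w1u w3l w3u LbLa La0 l2pos by linarith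
  show "abs (ln (abs r1) - ln (abs r3)) + abs (ln (abs (a*r1 - 1)) - ln (abs (a*r3 - 1))) < ln (((r1 - r2)*(r1 - r3)*(r2 - r3))^2) - 6 * ln 2"
    unfolding l2d using A3 A4 LD LbLa La0 l2pos by linarith
  have A5: "abs (ln (abs r2) - ln (abs r3)) < 2*La + Lb + 2*l2" unfolding abs_less_iff using v2l v2u v3l v3u LbLa La0 l2pos by linarith
  have A6: "abs (ln (abs (a*r2 - 1)) - ln (abs (a*r3 - 1))) < 4*La + 2*Lb + 5*l2" unfolding abs_less_iff using w2l w2u w3l w3u LbLa La0 l2pos by linarith
  show "abs (ln (abs r2) - ln (abs r3)) + abs (ln (abs (a*r2 - 1)) - ln (abs (a*r3 - 1))) < ln (((r1 - r2)*(r1 - r3)*(r2 - r3))^2) - 6 * ln 2"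
    unfolding l2d using A5 A6 LD LbLa La0 l2pos by linarith
  show "ln (abs r1) * ln (abs (a*r2 - 1)) - ln (abs r2) * ln (abs (a*r1 - 1)) \<noteq> 0"
  proof -
    have "(l2 + La) * l2 < (Lb - 2 * l2) * (Lb - l2)"
      by (rule mult_strict_mono) (use LbLa La0 l2pos in linarith)+
    also have "(Lb - 2 * l2) * (Lb - l2) < (- ln (abs (a*r2 - 1))) * (- ln (abs r1))"
      by (rule mult_strict_mono) (use LbLa La0 l2pos w2u v1u in linarith)+
    finally have P: "(l2 + La) * l2 < ln (abs r1) * ln (abs (a*r2 - 1))" by (simp add: mult.commute)
    have "(- ln (abs r2)) * (- ln (abs (a*r1 - 1))) \<le> (l2 + La) * l2"
      by (rule mult_mono) (use v2l v2u w1l w1u La0 l2pos in linarith)+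
    hence "ln (abs r2) * ln (abs (a*r1 - 1)) \<le> (l2 + La) * l2" by simp
    thus ?thesis using P by linarith
  qed
qed


lemma concrete:
  fixes a t :: int
  assumes a1: "a \<ge> 1" and tb: "real_of_int t \<ge> 1048576 * (real_of_int a)^4"
  shows "fundamental_units (Zadj (smallest_pos_root (f_poly t a))) (smallest_pos_root (f_poly t a))
           (real_of_int a * smallest_pos_root (f_poly t a) - 1)"
proof -
  define b where "b = a^4 - 2*a + t"
  have ra1: "real_of_int a \<ge> 1" using a1 by simp
  have a4: "(real_of_int a)^4 \<ge> real_of_int a"
  proof -
    have "(real_of_int a)^3 \<ge> 1" using ra1 by (simp add: one_le_power)
    hence "real_of_int a * (real_of_int a)^3 \<ge> real_of_int a * 1" using ra1 by (intro mult_left_mono) auto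
    thus ?thesis by (simp add: power_numeral_reduce)
  qed
  have rb: "real_of_int b = (real_of_int a)^4 - 2 * real_of_int a + real_of_int t" unfolding b_def by simp
  have a40: "(real_of_int a)^4 \<ge> 0" by simp
  have bb: "real_of_int b \<ge> 262144 * (real_of_int a)^4" using rb tb a4 a40 by linarith
  have b1: "b \<ge> 1"
  proof -
    have "real_of_int b \<ge> 1" using bb a4 ra1 by linarith
    thus ?thesis by simp
  qed
  obtain r1 r2 r3 where
    rt: "\<forall>r\<in>{r1,r2,r3}. r^3 + (real_of_int a * real_of_int b)*r^2 - (real_of_int a + real_of_int b)*r + 1 = 0"
    and i1: "1 / real_of_int b < r1" "r1 < 2 / real_of_int b"
    and i2: "1 / (2 * real_of_int a) < r2" "r2 < 1 / real_of_int a"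
    and i3: "- (real_of_int a * real_of_int b) - 2 < r3" "r3 < - (real_of_int a * real_of_int b)"
    using roots_exist[OF ra1 bb] by blast
  have fr: "r^3 + real_of_int (a*b) * r^2 - real_of_int (a+b) * r + 1 = 0" if "r \<in> {r1,r2,r3}" for r
    using rt that by auto
  have apos: "real_of_int a > 0" using ra1 by simp
  have bpos: "real_of_int b > 0" using b1 by simp
  have r1pos: "r1 > 0" using i1 bpos by (smt (verit) divide_pos_pos)
  have r2pos: "r2 > 0" using i2 apos by (smt (verit) divide_pos_pos)
  have r3neg: "r3 < 0"
  proof -
    have "real_of_int a * real_of_int b > 0" using apos bpos by simp
    thus ?thesis using i3 by linarith
  qed
  have r12: "r1 < r2"
  proof -
    have b8a: "real_of_int b \<ge> 8 * real_of_int a" using bb a4 ra1 by linarith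
    have "2 / real_of_int b \<le> 1 / (2 * real_of_int a)" using b8a apos bpos by (simp add: divide_simps)
    thus ?thesis using i1 i2 by linarith
  qed
  have fone: "a*b - (a+b) + 2 \<noteq> 0"
  proof -
    have "(a - 1) * (b - 1) \<ge> 0" using a1 b1 by simp
    moreover have "a*b - (a+b) + 2 = (a - 1) * (b - 1) + 1" by (simp add: algebra_simps)
    ultimately show ?thesis by linarith
  qed
  have fmone: "a*b + (a+b) \<noteq> 0"
  proof -
    have "a * b \<ge> 0" using a1 b1 by simp
    thus ?thesis using a1 b1 by linarith
  qed
  interpret K: cub "a*b" "a+b" r1 r2 r3
    by (unfold_locales) (use fr r12 r1pos r2pos r3neg fone fmone in auto)
  have peval: "poly (map_poly of_int (f_poly t a)) x = x^3 + real_of_int (a*b) * x^2 - real_of_int (a+b) * x + 1" for x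
    unfolding fpoly_eval b_def by simp
  have S: "{x::real. 0 < x \<and> poly (map_poly of_int (f_poly t a)) x = 0} = {r1, r2}"
    unfolding peval K.factor using r1pos r2pos r3neg by auto
  have theta: "smallest_pos_root (f_poly t a) = r1"
    unfolding smallest_pos_root_def S using r12 by simp
  have inv1: "inverse r1 = val3 r1 (a+b) (-(a*b)) (-1)"
  proof -
    have "r1 * val3 r1 (a+b) (-(a*b)) (-1) = 1"
      using fr[of r1] unfolding val3_def by (simp add: algebra_simps power2_eq_square power3_eq_cube)
    thus ?thesis by (metis inverse_unique)
  qed
  have tu: "r1 \<in> units_of_order K.Ord"
    unfolding units_of_order_def using K.r1_in r1pos inv1 K.val3_in by auto
  define eta where "eta = real_of_int a * r1 - 1"
  have etav: "eta = val3 r1 (-1) a 0" unfolding eta_def val3_def by simp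
  have eta_in: "eta \<in> K.Ord" unfolding etav by (rule K.val3_in)
  have inv2: "inverse eta = val3 r1 1 (-b) 0 * inverse r1 ^ 3"
  proof -
    have "eta * val3 r1 1 (-b) 0 = r1^3"
      using fr[of r1] unfolding eta_def val3_def by (simp add: algebra_simps power2_eq_square power3_eq_cube)
    hence "eta * (val3 r1 1 (-b) 0 * inverse r1 ^ 3) = 1" using r1pos
      by (simp add: field_simps)
    thus ?thesis by (metis inverse_unique)
  qed
  have "inverse r1 ^ 3 \<in> K.Ord" using K.unit_power[OF K.unit_inverse[OF tu]] unfolding units_of_order_def by auto
  hence "inverse eta \<in> K.Ord" unfolding inv2 by (intro K.O_mult K.val3_in)
  moreover have "eta \<noteq> 0" using \<open>inverse eta \<in> K.Ord\<close> inv2 r1pos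
  proof -
    have "eta * val3 r1 1 (-b) 0 = r1^3"
      using fr[of r1] unfolding eta_def val3_def by (simp add: algebra_simps power2_eq_square power3_eq_cube)
    thus ?thesis using r1pos by auto
  qed
  ultimately have eu: "eta \<in> units_of_order K.Ord" unfolding units_of_order_def using eta_in by auto
  have sg: "K.sig r eta = real_of_int a * r - 1" for r
    unfolding etav K.sig_val3 by (simp add: val3_def)
  have f1': "r1^3 + (real_of_int a * real_of_int b)*r1^2 - (real_of_int a + real_of_int b)*r1 + 1 = 0"
    and f2': "r2^3 + (real_of_int a * real_of_int b)*r2^2 - (real_of_int a + real_of_int b)*r2 + 1 = 0"
    and f3': "r3^3 + (real_of_int a * real_of_int b)*r3^2 - (real_of_int a + real_of_int b)*r3 + 1 = 0"
    using rt by auto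
  note num = numeric[OF ra1 bb f1' f2' f3' i1 i2 i3]
  have "fundamental_units K.Ord r1 eta"
    by (rule K.fund[OF tu eu num[folded sg]])
  thus ?thesis unfolding theta eta_def .
qed


theorem mainTheorem4:
  fixes \<alpha> c :: real
  assumes "0 < \<alpha>" "\<alpha> < 1/4" "0 < c" "c < 1"
  shows "\<exists>T::int. \<forall>(t::int) (a::int).
           t \<ge> T \<and> t \<ge> 1 \<and> a \<ge> 1 \<and> c * real_of_int t powr \<alpha> \<le> real_of_int a
             \<and> real_of_int a \<le> real_of_int t powr \<alpha> \<longrightarrow>
           (let \<theta> = smallest_pos_root (f_poly t a) in
              fundamental_units (Zadj \<theta>) \<theta> (real_of_int a * \<theta> - 1))"
proof -
  define e where "e = 1 - 4 * \<alpha>"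
  have epos: "e > 0" unfolding e_def using assms by simp
  define T0 where "T0 = (1048576::real) powr (1 / e)"
  show ?thesis
  proof (intro exI[of _ "\<lceil>T0\<rceil>"] allI impI)
    fix t a :: int
    assume h: "t \<ge> \<lceil>T0\<rceil> \<and> t \<ge> 1 \<and> a \<ge> 1 \<and> c * real_of_int t powr \<alpha> \<le> real_of_int a
             \<and> real_of_int a \<le> real_of_int t powr \<alpha>"
    define x where "x = real_of_int t"
    have x1: "x \<ge> 1" unfolding x_def using h by simp
    have xT: "x \<ge> T0" unfolding x_def using h by linarith
    have T0pos: "T0 \<ge> 0" unfolding T0_def by simp
    have "x powr e \<ge> T0 powr e" using xT T0pos epos by (intro powr_mono2) auto
    moreover have "T0 powr e = 1048576" unfolding T0_def powr_powr using epos by simp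
    ultimately have xe: "x powr e \<ge> 1048576" by simp
    have aa: "real_of_int a \<le> x powr \<alpha>" using h unfolding x_def by simp
    have "(real_of_int a)^4 \<le> (x powr \<alpha>)^4" using aa h by (intro power_mono) auto
    also have "(x powr \<alpha>)^4 = x powr (4 * \<alpha>)" using x1 by (simp add: powr_power)
    finally have a4: "(real_of_int a)^4 \<le> x powr (4 * \<alpha>)" .
    have "x = x powr (e + 4 * \<alpha>)" unfolding e_def using x1 by simp
    also have "\<dots> = x powr e * x powr (4 * \<alpha>)" by (rule powr_add)
    finally have xs: "x = x powr e * x powr (4 * \<alpha>)" .
    have "1048576 * (real_of_int a)^4 \<le> x powr e * x powr (4 * \<alpha>)"
      using xe a4 by (intro mult_mono) auto
    hence tb: "real_of_int t \<ge> 1048576 * (real_of_int a)^4" using xs unfolding x_def by simp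
    show "let \<theta> = smallest_pos_root (f_poly t a) in fundamental_units (Zadj \<theta>) \<theta> (real_of_int a * \<theta> - 1)"
      unfolding Let_def using concrete[OF _ tb] h by simp
  qed
qed


end
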